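(* For every integer $n\ge0$, $$\sum_{k=0}^{2n}\frac{(-1)^k}{\binom{2n}{k}^2}=(2n+1)\frac{(-1)^n}{\binom{2n}{n}}\left(\frac34\sum_{k=1}^n\frac{(-1)^k\binom{2k}{k}}{k}+\sum_{k=0}^n\frac{(-1)^k\binom{2k}{k}}{2k+1}\right).$$ *)

theory Defs
  imports Complex_Main
begin

end

theory Submission
  imports Defs
begin
definition Pp :: "real \<Rightarrow> real \<Rightarrow> real" where
  "Pp m x = - (x^2)/2 + (3*m+1)*x/2 - m*(5*m+3)/4"
lemma key_poly0:
  fixes u v y :: real assumes "u \<noteq> 0" "v \<noteq> 0" "y + 1 \<noteq> 0" "v = u - 1"
  shows "1 + (y+3)*(y+2)/(4*(y+1)^2) * ((y+2)*(y+1))^2/(u*v)^2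
     = - Pp (y+2) (y+3-u) * (y+3-u)^2/(u^2*v^2) - Pp (y+2) (y+2-u)/u^2"
  using assms unfolding Pp_def by (simp add: field_simps) algebra
lemma key_poly:
  fixes x y :: real assumes "x \<le> y" "0 \<le> x"
  shows "1 + (y+3)*(y+2)/(4*(y+1)^2) * ((y+2)*(y+1))^2/((y+2-x)*(y+1-x))^2
     = - Pp (y+2) (x+1) * (x+1)^2/((y+2-x)^2*(y+1-x)^2) - Pp (y+2) x/(y+2-x)^2"
  using key_poly0[of "y+2-x" "y+1-x" y] assms by (simp add: algebra_simps)

definition G :: "nat \<Rightarrow> nat \<Rightarrow> real" where
  "G N k = Pp (real N + 2) (real k) * (-1)^k / (real ((N+2) choose k))^2 / (real N + 2 - real k)^2"

definition cc :: "nat \<Rightarrow> real" where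
  "cc N = (real N+3)*(real N+2)/(4*(real N+1)^2)"

lemma key:
  assumes "k \<le> N"
  shows "(-1)^k/(real((N+2) choose k))^2 + cc N * ((-1)^k/(real(N choose k))^2) = G N (Suc k) - G N k"
proof -
  define A where "A = real ((N+2) choose k)"
  define B where "B = real ((N+2) choose Suc k)"
  define b where "b = real (N choose k)"
  define x where "x = real k"
  define y where "y = real N"
  define s where "s = ((-1::real)^k)"
  have xy: "x \<le> y" "0 \<le> x" using assms by (auto simp: x_def y_def)
  have Apos: "A > 0" unfolding A_def of_nat_0_less_iff by (rule zero_less_binomial) (use assms in simp)
  have Bpos: "B > 0" unfolding B_def of_nat_0_less_iff by (rule zero_less_binomial) (use assms in simp)
  have bpos: "b > 0" unfolding b_def of_nat_0_less_iff by (rule zero_less_binomial) (use assms in simp)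
  have n1: "(N+2-k)*((N+2) choose k) = (N+2)*((N+1) choose k)"
    using binomial_absorb_comp[of "N+2" k] by simp
  have n2: "(N+1-k)*((N+1) choose k) = (N+1)*(N choose k)"
    using binomial_absorb_comp[of "N+1" k] by simp
  have n3: "Suc k * ((N+2) choose Suc k) = (N+2)*((N+1) choose k)"
    using binomial_absorption[of k "N+2"] by simp
  have d1: "real (N+2-k) = y+2-x" using assms by (simp add: x_def y_def of_nat_diff)
  have d2: "real (N+1-k) = y+1-x" using assms by (simp add: x_def y_def of_nat_diff)
  have r1: "(y+2-x)*A = (y+2)*real ((N+1) choose k)"
  proof -
    have "real ((N+2-k)*((N+2) choose k)) = real ((N+2)*((N+1) choose k))" using n1 by (rule arg_cong)
    then show ?thesis unfolding of_nat_mult d1 A_def y_def by simp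
  qed
  have r2: "(y+1-x)*real ((N+1) choose k) = (y+1)*b"
  proof -
    have "real ((N+1-k)*((N+1) choose k)) = real ((N+1)*(N choose k))" using n2 by (rule arg_cong)
    then show ?thesis unfolding of_nat_mult d2 b_def y_def by simp
  qed
  have r3: "(x+1)*B = (y+2-x)*A"
  proof -
    have "real (Suc k * ((N+2) choose Suc k)) = real ((N+2)*((N+1) choose k))" using n3 by (rule arg_cong)
    then have "(x+1)*B = (y+2)*real((N+1) choose k)"
      unfolding of_nat_mult B_def x_def y_def by (simp del: binomial_Suc_Suc add: add.commute)
    then show ?thesis using r1 by simp
  qed
  have D: "y+2-x \<noteq> 0" "y+1-x \<noteq> 0" "x+1 \<noteq> 0" "y+1 \<noteq> 0" "y+2 \<noteq> 0" using xy by auto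
  have hb: "A^2/b^2 = ((y+2)*(y+1))^2/((y+2-x)*(y+1-x))^2"
  proof -
    have "A*((y+2-x)*(y+1-x)) = b*((y+2)*(y+1))" using r1 r2
      by (metis mult.assoc mult.commute)
    then have "A/b = ((y+2)*(y+1))/((y+2-x)*(y+1-x))" using D bpos
      by (simp add: divide_simps)
    then show ?thesis by (metis power_divide)
  qed
  have hB: "1/B^2 = (x+1)^2/(A^2*(y+2-x)^2)"
  proof -
    have "1/B = (x+1)/(A*(y+2-x))" using r3 D Apos Bpos
      by (simp add: divide_simps)
    then show ?thesis by (metis power_divide power_mult_distrib power_one)
  qed
  have kp: "1 + cc N * (A^2/b^2) = - Pp (y+2) (x+1) * (x+1)^2/((y+2-x)^2*(y+1-x)^2) - Pp (y+2) x/(y+2-x)^2"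
    using key_poly[OF xy] unfolding hb cc_def y_def by (simp add: field_simps)
  have L: "(-1)^k/(real((N+2) choose k))^2 + cc N * ((-1)^k/(real(N choose k))^2) = s/A^2 * (1 + cc N * (A^2/b^2))"
    unfolding A_def b_def s_def using Apos bpos unfolding A_def b_def by (simp add: field_simps)
  have R: "G N (Suc k) - G N k = s/A^2 * (- Pp (y+2) (x+1) * (x+1)^2/((y+2-x)^2*(y+1-x)^2) - Pp (y+2) x/(y+2-x)^2)"
  proof -
    have "G N (Suc k) = - s * Pp (y+2) (x+1) * (1/B^2) / (y+1-x)^2"
      unfolding G_def s_def B_def x_def y_def by (simp add: algebra_simps)
    also have "\<dots> = - s * Pp (y+2) (x+1) * ((x+1)^2/(A^2*(y+2-x)^2)) / (y+1-x)^2"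
      unfolding hB ..
    finally have g1: "G N (Suc k) = \<dots>" .
    have g2: "G N k = s * Pp (y+2) x / A^2 / (y+2-x)^2"
      unfolding G_def s_def A_def x_def y_def by (simp add: algebra_simps)
    show ?thesis unfolding g1 g2 using D Apos by (simp add: field_simps)
  qed
  show ?thesis unfolding L R kp ..
qed

definition S :: "nat \<Rightarrow> real" where
  "S m = (\<Sum>k=0..m. (-1::real)^k / (real (m choose k))^2)"

lemma recS:
  assumes "even N"
  shows "S (N+2) + cc N * S N = (5*(real N+2)+3)/(2*(real N+2))"
proof -
  have tel: "(\<Sum>k=0..N. (-1::real)^k/(real((N+2) choose k))^2 + cc N * ((-1)^k/(real(N choose k))^2))
        = G N (Suc N) - G N 0"
  proof -
    have "(\<Sum>k=0..N. (-1::real)^k/(real((N+2) choose k))^2 + cc N * ((-1)^k/(real(N choose k))^2))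
        = (\<Sum>k=0..N. G N (Suc k) - G N k)"
      by (rule sum.cong[OF refl], rule key, simp)
    also have "\<dots> = G N (Suc N) - G N 0" by (rule sum_Suc_diff) simp
    finally show ?thesis .
  qed
  have split: "S (N+2) = (\<Sum>k=0..N. (-1::real)^k/(real((N+2) choose k))^2)
      + (-1)^(Suc N)/(real((N+2) choose Suc N))^2 + (-1)^(Suc (Suc N))/(real((N+2) choose Suc (Suc N)))^2"
    unfolding S_def by (simp add: sum.atLeast0_atMost_Suc del: binomial_Suc_Suc)
  have c1: "(N+2) choose Suc N = N+2"
    by (metis add_2_eq_Suc' binomial_n_n binomial_Suc_n choose_one) 
  have c2: "(N+2) choose Suc (Suc N) = 1" by simp
  have sg: "(-1::real)^(Suc N) = -1" "(-1::real)^(Suc (Suc N)) = 1" using assms by auto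
  have sumsplit: "(\<Sum>k=0..N. (-1::real)^k/(real((N+2) choose k))^2 + cc N * ((-1)^k/(real(N choose k))^2))
     = (\<Sum>k=0..N. (-1::real)^k/(real((N+2) choose k))^2) + cc N * S N"
    unfolding S_def by (simp add: sum.distrib sum_distrib_left)
  have g1: "G N (Suc N) = - Pp (real N + 2) (real N + 1) / (real N + 2)^2"
    unfolding G_def using sg c1 by (simp add: add.commute)
  have g0: "G N 0 = Pp (real N + 2) 0 / (real N + 2)^2"
    unfolding G_def by simp
  have "S (N+2) + cc N * S N = G N (Suc N) - G N 0 - 1/(real N + 2)^2 + 1"
    using tel sumsplit split c1 c2 sg by simp
  also have "\<dots> = (5*(real N+2)+3)/(2*(real N+2))"
    unfolding g1 g0 Pp_def by (simp add: field_simps) algebra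
  finally show ?thesis .
qed

definition T :: "nat \<Rightarrow> real" where
  "T n = (3/4) * (\<Sum>k=1..n. (-1::real)^k * real ((2*k) choose k) / real k)
          + (\<Sum>k=0..n. (-1::real)^k * real ((2*k) choose k) / real (2*k+1))"

lemma alg:
  fixes C C' s t z :: real
  assumes "C > 0" "(z+1)*C' = 2*(2*z+1)*C" "s = 1 \<or> s = -1" "z \<ge> 0"
  shows "(2*z+3) * (-s/C') * (t + 3/4*(-s)*C'/(z+1) + (-s)*C'/(2*z+3))
     = - ((2*z+3)*(2*z+2)/(4*(2*z+1)^2)) * ((2*z+1)*(s/C)*t) + (5*(2*z+2)+3)/(2*(2*z+2))"
proof -
  have nz: "z+1 \<noteq> 0" "2*z+1 \<noteq> 0" "2*z+3 \<noteq> 0" "2*z+2 \<noteq> 0" using assms(4) by auto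
  have C'nz: "C' \<noteq> 0" using assms(1,2,4) by auto
  have ss: "s*s = 1" using assms(3) by auto
  have h1: "1/C = 2*(2*z+1)/((z+1)*C')" unfolding assms(2) using assms(1) nz by simp
  have h2: "(2*z+2)/(4*(2*z+1)^2)*(2*z+1) * (2*(2*z+1)/((z+1)*C')) = 1/C'"
  proof -
    have g: "\<And>v w. v \<noteq> 0 \<Longrightarrow> w \<noteq> 0 \<Longrightarrow> (2*v)/(4*w^2)*w*(2*w/(v*C')) = 1/C'"
      using C'nz by (simp add: field_simps power2_eq_square)
    have "2*z+2 = 2*(z+1)" by simp
    then show ?thesis using g[of "z+1" "2*z+1"] nz by simp
  qed
  have e1: "(-s/C') * (3/4*(-s)*C'/(z+1)) = (s*s)*(3/(4*(z+1)))" using C'nz nz by (simp add: field_simps)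
  have e2: "(-s/C') * ((-s)*C'/(2*z+3)) = (s*s)*(1/(2*z+3))" using C'nz nz by (simp add: field_simps)
  have "(2*z+3) * (-s/C') * (t + 3/4*(-s)*C'/(z+1) + (-s)*C'/(2*z+3))
     = (2*z+3) * ((-s/C') * t + (-s/C') * (3/4*(-s)*C'/(z+1)) + (-s/C') * ((-s)*C'/(2*z+3)))"
    by (simp only: distrib_left mult.assoc)
  also have "\<dots> = (2*z+3) * (-s/C') * t + (2*z+3)*(3/(4*(z+1))) + 1"
    unfolding e1 e2 ss using nz by (simp add: algebra_simps add_divide_distrib diff_divide_distrib)
  finally have A1: "(2*z+3) * (-s/C') * (t + 3/4*(-s)*C'/(z+1) + (-s)*C'/(2*z+3))
     = (2*z+3) * (-s/C') * t + (2*z+3)*(3/(4*(z+1))) + 1" .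
  have A2: "(2*z+3)*(3/(4*(z+1))) + 1 = (5*(2*z+2)+3)/(2*(2*z+2))"
    using nz by (simp add: field_simps) 
  have A3: "(2*z+3) * (-s/C') * t = - ((2*z+3)*(2*z+2)/(4*(2*z+1)^2)) * ((2*z+1)*(s/C)*t)"
  proof -
    have "- ((2*z+3)*(2*z+2)/(4*(2*z+1)^2)) * ((2*z+1)*(s/C)*t)
        = - (2*z+3) * s * t * ((2*z+2)/(4*(2*z+1)^2)*(2*z+1) * (1/C))" by algebra
    also have "\<dots> = (2*z+3) * (-s/C') * t" unfolding h1 h2 by algebra
    finally show ?thesis by simp
  qed
  show ?thesis using A1 A2 A3 by linarith
qed

lemma main: "S (2*n) = real (2*n+1) * ((-1)^n / real ((2*n) choose n)) * T n"
proof (induction n)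
  case 0
  then show ?case by (simp add: S_def T_def)
next
  case (Suc n)
  define C where "C = real ((2*n) choose n)"
  define C' where "C' = real ((2*Suc n) choose Suc n)"
  define z where "z = real n"
  have Cpos: "C > 0" unfolding C_def by simp
  have zpos: "z \<ge> 0" unfolding z_def by simp
  have n1: "Suc n * ((2*n+2) choose Suc n) = (2*n+2) * ((2*n+1) choose n)"
    using binomial_absorption[of n "2*n+2"] by simp
  have n2: "(2*n+1-n) * ((2*n+1) choose n) = (2*n+1) * ((2*n) choose n)"
    using binomial_absorb_comp[of "2*n+1" n] by simp
  define C1 where "C1 = real ((2*n+1) choose n)"
  have r1: "(z+1)*C' = (2*z+2)*C1"
  proof -
    have "real (Suc n * ((2*n+2) choose Suc n)) = real ((2*n+2) * ((2*n+1) choose n))" using n1 by (rule arg_cong)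
    then show ?thesis unfolding of_nat_mult C1_def C'_def z_def by (simp del: binomial_Suc_Suc add: add.commute)
  qed
  have r2: "(z+1)*C1 = (2*z+1)*C"
  proof -
    have e: "2*n+1-n = n+1" by simp
    have "real ((n+1) * ((2*n+1) choose n)) = real ((2*n+1) * ((2*n) choose n))" using n2 unfolding e by (rule arg_cong)
    then show ?thesis unfolding of_nat_mult C1_def C_def z_def by (simp del: binomial_Suc_Suc add: add.commute)
  qed
  have cen: "(z+1)*C' = 2*(2*z+1)*C"
  proof -
    have "(2*z+2)*C1 = 2*((z+1)*C1)" by (simp add: algebra_simps)
    then show ?thesis using r1 r2 by simp
  qed
  have sg: "(-1::real)^n = 1 \<or> (-1::real)^n = -1" by (cases "even n") auto
  have ta: "(-1::real)^(Suc n) * real ((2*Suc n) choose Suc n) / real (Suc n) = (-((-1)^n))*C'/(z+1)"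
    unfolding C'_def z_def by (simp del: binomial_Suc_Suc)
  have tb: "(-1::real)^(Suc n) * real ((2*Suc n) choose Suc n) / real (2*Suc n+1) = (-((-1)^n))*C'/(2*z+3)"
    unfolding C'_def z_def by (simp del: binomial_Suc_Suc add: algebra_simps)
  have TS: "T (Suc n) = T n + 3/4*(-((-1)^n))*C'/(z+1) + (-((-1)^n))*C'/(2*z+3)"
    unfolding T_def sum.cl_ivl_Suc ta tb by (simp del: binomial_Suc_Suc add: algebra_simps)
  have r: "S (2*Suc n) = - cc (2*n) * S (2*n) + (5*(real (2*n)+2)+3)/(2*(real (2*n)+2))"
  proof -
    have "2*Suc n = 2*n+2" by simp
    then show ?thesis using recS[of "2*n"] by simp
  qed
  have ccz: "cc (2*n) = (2*z+3)*(2*z+2)/(4*(2*z+1)^2)" unfolding cc_def z_def by simp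
  have rz: "real(2*n+1) = 2*z+1" "(5*(real (2*n)+2)+3)/(2*(real (2*n)+2)) = (5*(2*z+2)+3)/(2*(2*z+2))"
    by (simp_all add: z_def)
  have IH: "S (2*n) = (2*z+1) * ((-1)^n / C) * T n" using Suc.IH unfolding C_def[symmetric] rz(1) .
  have main1: "S (2*Suc n) = (2*z+3) * (-((-1)^n)/C') * (T n + 3/4*(-((-1)^n))*C'/(z+1) + (-((-1)^n))*C'/(2*z+3))"
  proof -
    have m0: "S (2*Suc n) = - ((2*z+3)*(2*z+2)/(4*(2*z+1)^2)) * ((2*z+1)*((-1)^n/C)*T n) + (5*(2*z+2)+3)/(2*(2*z+2))"
      unfolding r IH ccz rz(2) ..
    show ?thesis unfolding m0 by (rule sym[OF alg[OF Cpos cen sg zpos, of "T n"]])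
  qed
  have e: "real(2*Suc n+1) * ((-1)^Suc n/real(2*Suc n choose Suc n)) = (2*z+3)*(-((-1::real)^n)/C')"
    unfolding C'_def z_def by (simp del: binomial_Suc_Suc)
  show ?case unfolding e TS by (rule main1)
qed

theorem mainTheorem10:
  fixes n :: nat
  shows "(\<Sum>k=0..2*n. (-1::real)^k / (real ((2*n) choose k))^2)
       = real (2*n+1) * ((-1::real)^n / real ((2*n) choose n)) *
         ((3/4) * (\<Sum>k=1..n. (-1::real)^k * real ((2*k) choose k) / real k)
          + (\<Sum>k=0..n. (-1::real)^k * real ((2*k) choose k) / real (2*k+1)))"
  using main[of n] unfolding S_def T_def .
end
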